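(* Let $d\ge 2$, let $v\in\mathbb{R}^d$ be a unit vector, $P_F:=vv^\top$, $P_S:=I-vv^\top$, and $w_\star\in\mathbb{R}^d$. Suppose the loss is $L(w)=\ell\big(v^\top(w-w_\star)\big)+\tfrac12\|H^{1/2}P_S(w-w_\star)\|_2^2$, where $\ell:\mathbb{R}\to\mathbb{R}$ is $C^2$ and $H$ is a symmetric positive semidefinite $d\times d$ matrix with $HP_F=0$, $HP_S=P_SH=H$, whose eigenvalues on $\mathrm{range}(P_S)$, denoted $\lambda_1,\dots,\lambda_{d-1}$, lie in $[\mu,L_S]$ for some $0<\mu\le L_S$. Let $\eta\in(0,2/L_S)$, $\mu_F>0$, $\sigma>0$, and let the iterates satisfy $$w_{k+1}=w_k-\eta\nabla L(w_k)-\eta\mu_F v+\eta g_k,$$ where $(g_k)_{k\ge0}$ are i.i.d. with $g_k\sim\mathcal{N}(0,\sigma^2P_S)$. Let $T\ge1$, $N\ge1$, $k_0\ge0$, and assume the mountain coordinates $z_k:=P_S(w_k-w_\star)$ form a stationary process for $k\ge k_0$. Define checkpoints $w^{(m)}:=w_{k_0+mT}$, the merged checkpoint $\bar w:=\frac1N\sum_{m=0}^{N-1}w^{(m)}$, and the river deviation $D(w):=\|P_S(w-w_\star)\|_2$. Then $$\mathbb{E}\,D(\bar w)^2=\sum_{j=1}^{d-1}\left(\frac{\eta\sigma^2}{2\lambda_j-\eta\lambda_j^2}\right)\cdot\frac{1}{N^2}\left[N+2\sum_{r=1}^{N-1}(N-r)(1-\eta\lambda_j)^{rT}\right].$$ In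 particular, if $\varepsilon\in[0,1)$ satisfies $|1-\eta\lambda_j|^T\le\varepsilon$ for all $j$, then $$\mathbb{E}\,D(\bar w)^2\le\frac1N\left(1+\frac{2\varepsilon}{1-\varepsilon}\right)\sum_{j=1}^{d-1}\frac{\eta\sigma^2}{2\lambda_j-\eta\lambda_j^2}.$$
   Context: This models late-stage SGD in a "river-valley" landscape: $v$ is the (constant) flat "river" direction, the river is the line $\{w_\star+\alpha v:\alpha\in\mathbb{R}\}$, and $\mathrm{range}(P_S)$ is the high-curvature "mountain" subspace. Stationarity after the burn-in time $k_0$ means the law of $(z_{k_0+k})_{k\ge0}$ is shift-invariant (e.g., $z_{k_0}$ is drawn from the stationary distribution of the mountain recursion, independently of $g_k$, $k\ge k_0$). *)

theory Defs
  imports "HOL-Analysis.Analysis" "HOL-Probability.Probability"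
begin

definition projF :: "real^'n \<Rightarrow> real^'n^'n" where
  "projF v = (\<chi> i j. v $ i * v $ j)"

definition projS :: "real^'n \<Rightarrow> real^'n^'n" where
  "projS v = mat 1 - projF v"

definition psd :: "real^'n^'n \<Rightarrow> bool" where
  "psd A \<longleftrightarrow> transpose A = A \<and> (\<forall>x. 0 \<le> x \<bullet> (A *v x))"

definition msqrt :: "real^'n^'n \<Rightarrow> real^'n^'n" where
  "msqrt A = (THE S. psd S \<and> S ** S = A)"

definition river_loss ::
  "(real \<Rightarrow> real) \<Rightarrow> real^'n \<Rightarrow> real^'n \<Rightarrow> real^'n^'n \<Rightarrow> real^'n \<Rightarrow> real" where
  "river_loss l v wstar H w =
     l (v \<bullet> (w - wstar)) + (1/2) * (norm (msqrt H *v (projS v *v (w - wstar))))\<^sup>2"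

text \<open>Centred Gaussian random vector with covariance matrix C (possibly degenerate),
  defined via its one-dimensional projections (Cramer--Wold): every projection a^T X
  is N(0, a^T C a), where N(0,0) is the Dirac measure at 0.\<close>
definition centred_gaussian_vector ::
  "'a measure \<Rightarrow> ('a \<Rightarrow> real^'n) \<Rightarrow> real^'n^'n \<Rightarrow> bool" where
  "centred_gaussian_vector M X C \<longleftrightarrow>
     X \<in> borel_measurable M \<and>
     (\<forall>a. (if a \<bullet> (C *v a) = 0
           then distr M borel (\<lambda>\<omega>. a \<bullet> X \<omega>) = return borel 0
           else distributed M lborel (\<lambda>\<omega>. a \<bullet> X \<omega>)
                  (\<lambda>x. ennreal (normal_density 0 (sqrt (a \<bullet> (C *v a))) x))))"

definition stationary_from ::
  "'a measure \<Rightarrow> (nat \<Rightarrow> 'a \<Rightarrow> real^'n) \<Rightarrow> nat \<Rightarrow> bool" where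
  "stationary_from M z k0 \<longleftrightarrow>
     (\<forall>s. distr M (Pi\<^sub>M UNIV (\<lambda>_. borel)) (\<lambda>\<omega> i. z (k0 + s + i) \<omega>)
        = distr M (Pi\<^sub>M UNIV (\<lambda>_. borel)) (\<lambda>\<omega> i. z (k0 + i) \<omega>))"

end

theory Submission
  imports Defs
begin


lemma projF_apply: "projF v *v x = (v \<bullet> x) *\<^sub>R v"
  by (simp add: projF_def matrix_vector_mult_def vec_eq_iff inner_vec_def
      sum_distrib_left mult.commute mult.left_commute)

lemma projS_apply: "projS v *v x = x - (v \<bullet> x) *\<^sub>R v"
  by (simp add: projS_def matrix_vector_mult_diff_rdistrib projF_apply)

lemma sym_matrix_apply:
  fixes c :: "nat \<Rightarrow> real" and u :: "nat \<Rightarrow> real^'n"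
  shows "(\<chi> i k. \<Sum>j\<in>J. c j * u j $ i * u j $ k) *v x = (\<Sum>j\<in>J. (c j * (u j \<bullet> x)) *\<^sub>R u j)"
  by (simp add: matrix_vector_mult_def vec_eq_iff inner_vec_def sum_distrib_left
      sum_distrib_right sum_component mult.commute mult.left_commute sum.swap[of _ J])

lemma transpose_inner: "(A *v x) \<bullet> y = x \<bullet> (transpose A *v (y::real^'n))"
  by (metis dot_lmul_matrix inner_commute transpose_matrix_vector transpose_transpose)




context
  fixes v :: "real^'n" and u :: "nat \<Rightarrow> real^'n" and J :: "nat set"
  assumes v1: "norm v = 1" and J: "J = {1..CARD('n)-1}"
  and orth: "\<And>i j. i \<in> J \<Longrightarrow> j \<in> J \<Longrightarrow> u i \<bullet> u j = (if i = j then 1 else 0)"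
  and uv: "\<And>j. j \<in> J \<Longrightarrow> u j \<bullet> v = 0"
begin

lemma vv: "v \<bullet> v = 1"
  using v1 by (metis norm_eq_sqrt_inner real_sqrt_eq_1_iff)

lemma finJ: "finite J" using J by simp

lemma sum_delta_u: "j \<in> J \<Longrightarrow> (\<Sum>i\<in>J. c i * (u j \<bullet> u i)) = c j"
proof -
  assume j: "j \<in> J"
  have "(\<Sum>i\<in>J. c i * (u j \<bullet> u i)) = (\<Sum>i\<in>J. if j = i then c i else 0)"
    by (rule sum.cong) (auto simp: orth j)
  then show ?thesis using finJ j by (simp add: sum.delta)
qed

lemma expand: "x = (v \<bullet> x) *\<^sub>R v + (\<Sum>j\<in>J. (u j \<bullet> x) *\<^sub>R u j)"
proof -
  define y where "y = x - (v \<bullet> x) *\<^sub>R v - (\<Sum>j\<in>J. (u j \<bullet> x) *\<^sub>R u j)"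
  have yv: "v \<bullet> y = 0"
    unfolding y_def using uv
    by (simp add: inner_diff_right inner_sum_right vv inner_commute)
  have yu: "u j \<bullet> y = 0" if "j \<in> J" for j
  proof -
    have "u j \<bullet> y = u j \<bullet> x - (\<Sum>i\<in>J. (u i \<bullet> x) * (u j \<bullet> u i))"
      unfolding y_def using uv that
      by (simp add: inner_diff_right inner_sum_right inner_commute)
    also have "\<dots> = 0" using sum_delta_u[OF that, of "\<lambda>i. u i \<bullet> x"] by simp
    finally show ?thesis .
  qed
  have "y = 0"
  proof (rule ccontr)
    assume y0: "y \<noteq> 0"
    define B where "B = insert v (insert y (u ` J))"
    have uu: "u j \<bullet> u j = 1" if "j \<in> J" for j using orth[OF that that] by simp
    have po: "pairwise orthogonal B"
      unfolding B_def pairwise_def orthogonal_def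
      using yv yu uv orth
      by (auto simp: inner_commute)
    have nz: "0 \<notin> B"
      unfolding B_def using y0 vv uu by (force simp: image_iff)
    have ind: "independent B" by (rule pairwise_orthogonal_independent[OF po nz])
    have cB: "card B \<le> CARD('n)"
      using independent_bound[OF ind] by simp
    have inj: "inj_on u J"
      unfolding inj_on_def using orth uu by (metis zero_neq_one)
    have vn: "v \<notin> u ` J" using uv vv by auto
    have yn: "y \<notin> u ` J" using yu uu by (metis imageE inner_commute zero_neq_one)
    have vy: "v \<noteq> y" using yv vv by auto
    have "card B = card J + 2"
      unfolding B_def using vn yn vy finJ inj by (simp add: card_image)
    moreover have "card J = CARD('n) - 1" using J by simp
    moreover have "CARD('n) \<ge> 1" by (simp add: Suc_leI)
    ultimately show False using cB by linarith
  qed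
  then show ?thesis unfolding y_def by (simp add: algebra_simps)
qed

lemma parseval: "(norm x)\<^sup>2 = (v \<bullet> x)\<^sup>2 + (\<Sum>j\<in>J. (u j \<bullet> x)\<^sup>2)"
proof -
  have "(norm x)\<^sup>2 = x \<bullet> x" by (simp add: power2_norm_eq_inner)
  also have "\<dots> = x \<bullet> ((v \<bullet> x) *\<^sub>R v + (\<Sum>j\<in>J. (u j \<bullet> x) *\<^sub>R u j))"
    using expand[of x] by simp
  also have "\<dots> = (v \<bullet> x)\<^sup>2 + (\<Sum>j\<in>J. (u j \<bullet> x)\<^sup>2)"
    by (simp add: inner_add_right inner_sum_right power2_eq_square inner_commute)
  finally show ?thesis .
qed

end



lemma mv_sum: "(A::real^'n^'m) *v sum f S = (\<Sum>x\<in>S. A *v f x)"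
  by (induct S rule: infinite_finite_induct) (simp_all add: matrix_vector_right_distrib)

context
  fixes v :: "real^'n" and u :: "nat \<Rightarrow> real^'n" and J :: "nat set"
    and H :: "real^'n^'n" and lam :: "nat \<Rightarrow> real"
  assumes v1: "norm v = 1" and J: "J = {1..CARD('n)-1}"
  and orth: "\<And>i j. i \<in> J \<Longrightarrow> j \<in> J \<Longrightarrow> u i \<bullet> u j = (if i = j then 1 else 0)"
  and uv: "\<And>j. j \<in> J \<Longrightarrow> u j \<bullet> v = 0"
  and Hu: "\<And>j. j \<in> J \<Longrightarrow> H *v u j = lam j *\<^sub>R u j"
  and Hv: "H *v v = 0"
  and lampos: "\<And>j. j \<in> J \<Longrightarrow> 0 < lam j"
begin

lemma root_action:
  assumes S: "psd S" "S ** S = H"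
  shows "S *v v = 0" "\<And>j. j \<in> J \<Longrightarrow> S *v u j = sqrt (lam j) *\<^sub>R u j"
proof -
  have tS: "transpose S = S" using S(1) by (simp add: psd_def)
  have "(S *v v) \<bullet> (S *v v) = v \<bullet> (S *v (S *v v))"
    by (simp add: transpose_inner tS)
  also have "\<dots> = 0" by (simp add: matrix_vector_mul_assoc S(2) Hv)
  finally show "S *v v = 0" by simp
next
  fix j assume j: "j \<in> J"
  define c where "c = sqrt (lam j)"
  have c: "c > 0" "c * c = lam j" using lampos[OF j] by (auto simp: c_def)
  define e where "e = S *v u j - c *\<^sub>R u j"
  have "S *v e + c *\<^sub>R e = S *v (S *v u j) - (c * c) *\<^sub>R u j"
    unfolding e_def by (simp add: algebra_simps)
  also have "\<dots> = 0" by (simp add: matrix_vector_mul_assoc S(2) Hu[OF j] c)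
  finally have "S *v e = - (c *\<^sub>R e)" by (simp add: eq_neg_iff_add_eq_0)
  then have "e \<bullet> (S *v e) = - c * (e \<bullet> e)" by simp
  moreover have "0 \<le> e \<bullet> (S *v e)" using S(1) by (simp add: psd_def)
  ultimately have "c * (e \<bullet> e) \<le> 0" by simp
  then have "e \<bullet> e \<le> 0" using c(1) by (simp add: mult_le_0_iff)
  then have "e = 0" by (metis inner_ge_zero inner_eq_zero_iff order_antisym)
  then show "S *v u j = sqrt (lam j) *\<^sub>R u j" unfolding e_def c_def by simp
qed

lemma roots_unique:
  assumes S: "psd S" "S ** S = H" and S': "psd S'" "S' ** S' = H"
  shows "S = S'"
  unfolding matrix_eq
proof
  fix x
  have ex: "x = (v \<bullet> x) *\<^sub>R v + (\<Sum>j\<in>J. (u j \<bullet> x) *\<^sub>R u j)"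
    by (rule expand[OF v1 J orth uv])
  have "S *v x = (\<Sum>j\<in>J. (u j \<bullet> x) *\<^sub>R (sqrt (lam j) *\<^sub>R u j))"
    apply (subst ex)
    apply (simp only: matrix_vector_right_distrib mv_sum matrix_vector_mult_scaleR root_action[OF S])
    by (auto simp: root_action[OF S] intro!: sum.cong)
  moreover have "S' *v x = (\<Sum>j\<in>J. (u j \<bullet> x) *\<^sub>R (sqrt (lam j) *\<^sub>R u j))"
    apply (subst ex)
    apply (simp only: matrix_vector_right_distrib mv_sum matrix_vector_mult_scaleR root_action[OF S'])
    by (auto simp: root_action[OF S'] intro!: sum.cong)
  ultimately show "S *v x = S' *v x" by simp
qed

lemma root_exists: "\<exists>S. psd S \<and> S ** S = H"
proof -
  define S where "S = (\<chi> i k. \<Sum>j\<in>J. sqrt (lam j) * u j $ i * u j $ k)"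
  have Sx: "S *v x = (\<Sum>j\<in>J. (sqrt (lam j) * (u j \<bullet> x)) *\<^sub>R u j)" for x
    unfolding S_def by (rule sym_matrix_apply)
  have tS: "transpose S = S"
    unfolding S_def transpose_def by (simp add: vec_eq_iff mult.commute mult.left_commute)
  have xSx: "x \<bullet> (S *v x) = (\<Sum>j\<in>J. sqrt (lam j) * (u j \<bullet> x)\<^sup>2)" for x
    by (simp add: Sx inner_sum_right power2_eq_square inner_commute mult.assoc)
  have pos: "0 \<le> x \<bullet> (S *v x)" for x
    unfolding xSx using lampos by (intro sum_nonneg) (simp add: less_imp_le)
  have "(S ** S) *v x = H *v x" for x
  proof -
    have finJ: "finite J" using J by simp
    have ex: "x = (v \<bullet> x) *\<^sub>R v + (\<Sum>j\<in>J. (u j \<bullet> x) *\<^sub>R u j)"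
      by (rule expand[OF v1 J orth uv])
    have "H *v x = (\<Sum>j\<in>J. (lam j * (u j \<bullet> x)) *\<^sub>R u j)"
      apply (subst ex)
      apply (simp only: matrix_vector_right_distrib mv_sum matrix_vector_mult_scaleR Hv)
      by (auto simp: Hu intro!: sum.cong)
    moreover have "(S ** S) *v x = (\<Sum>j\<in>J. (lam j * (u j \<bullet> x)) *\<^sub>R u j)"
    proof -
      have "(S ** S) *v x = S *v (S *v x)" by (simp add: matrix_vector_mul_assoc)
      also have "\<dots> = (\<Sum>j\<in>J. (sqrt (lam j) * (u j \<bullet> (\<Sum>i\<in>J. (sqrt (lam i) * (u i \<bullet> x)) *\<^sub>R u i))) *\<^sub>R u j)"
        by (simp add: Sx)
      also have "\<dots> = (\<Sum>j\<in>J. (lam j * (u j \<bullet> x)) *\<^sub>R u j)"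
      proof (rule sum.cong[OF refl])
        fix j assume j: "j \<in> J"
        have "u j \<bullet> (\<Sum>i\<in>J. (sqrt (lam i) * (u i \<bullet> x)) *\<^sub>R u i) = (\<Sum>i\<in>J. (sqrt (lam i) * (u i \<bullet> x)) * (u j \<bullet> u i))"
          by (simp add: inner_sum_right)
        also have "\<dots> = sqrt (lam j) * (u j \<bullet> x)"
          by (rule sum_delta_u[OF v1 J orth uv j])
        finally show "(sqrt (lam j) * (u j \<bullet> (\<Sum>i\<in>J. (sqrt (lam i) * (u i \<bullet> x)) *\<^sub>R u i))) *\<^sub>R u j = (lam j * (u j \<bullet> x)) *\<^sub>R u j"
          using lampos[OF j] by (simp add: mult.assoc[symmetric])
      qed
      finally show ?thesis .
    qed
    ultimately show ?thesis by simp
  qed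
  then have "S ** S = H" by (simp add: matrix_eq)
  then show ?thesis using tS pos by (auto simp: psd_def)
qed

lemma msqrt_props: "psd (msqrt H)" "msqrt H ** msqrt H = H"
proof -
  have "psd (msqrt H) \<and> msqrt H ** msqrt H = H"
  proof -
    obtain S where S: "psd S \<and> S ** S = H" using root_exists by blast
    have "msqrt H = S" unfolding msqrt_def
      by (rule the_equality) (use S roots_unique in auto)
    then show ?thesis using S by simp
  qed
  then show "psd (msqrt H)" "msqrt H ** msqrt H = H" by auto
qed

lemma msqrt_u: "j \<in> J \<Longrightarrow> msqrt H *v u j = sqrt (lam j) *\<^sub>R u j"
  using root_action(2)[OF msqrt_props] .

lemma msqrt_sym: "transpose (msqrt H) = msqrt H"
  using msqrt_props(1) by (simp add: psd_def)

end



lemma rev_sum: "(\<Sum>m<N. c ^ (N - m)) = (\<Sum>r=1..N. (c::real) ^ r)"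
  by (rule sum.reindex_bij_witness[of _ "\<lambda>r. N - r" "\<lambda>m. N - m"]) auto

lemma comb:
  "(\<Sum>m<N. \<Sum>m'<N. (if m \<le> m' then c ^ (m' - m) else c ^ (m - m'))) =
   real N + 2 * (\<Sum>r=1..N-1. real (N - r) * (c::real) ^ r)"
proof (induction N)
  case 0 then show ?case by simp
next
  case (Suc N)
  have L: "(\<Sum>m<Suc N. \<Sum>m'<Suc N. (if m \<le> m' then c ^ (m' - m) else c ^ (m - m'))) =
     (\<Sum>m<N. \<Sum>m'<N. (if m \<le> m' then c ^ (m' - m) else c ^ (m - m'))) + 2 * (\<Sum>m<N. c ^ (N - m)) + 1"
    by (simp add: sum.distrib)
  have R: "(\<Sum>r=1..Suc N - 1. real (Suc N - r) * c ^ r) = (\<Sum>r=1..N-1. real (N - r) * c ^ r) + (\<Sum>r=1..N. c ^ r)"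
  proof -
    have "(\<Sum>r=1..N. real (Suc N - r) * c ^ r) = (\<Sum>r=1..N. real (N - r) * c ^ r + c ^ r)"
      by (rule sum.cong) (auto simp: Suc_diff_le algebra_simps)
    also have "\<dots> = (\<Sum>r=1..N. real (N - r) * c ^ r) + (\<Sum>r=1..N. c ^ r)" by (simp add: sum.distrib)
    also have "(\<Sum>r=1..N. real (N - r) * c ^ r) = (\<Sum>r=1..N-1. real (N - r) * c ^ r)"
    proof (cases N)
      case 0 then show ?thesis by simp
    next
      case (Suc K) then show ?thesis by (simp add: sum.cl_ivl_Suc)
    qed
    finally show ?thesis by simp
  qed
  show ?case unfolding L R Suc.IH rev_sum by simp
qed

lemma geom_bound:
  assumes "0 \<le> e" "e < (1::real)"
  shows "(\<Sum>r=1..M. e ^ r) \<le> e / (1 - e)"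
proof -
  have "(\<Sum>r=1..M. e ^ r) = (e - e ^ Suc M) / (1 - e)"
  proof (induction M)
    case 0 then show ?case using assms by simp
  next
    case (Suc M)
    have "(\<Sum>r=1..Suc M. e ^ r) = (\<Sum>r=1..M. e ^ r) + e ^ Suc M" by simp
    also have "\<dots> = (e - e ^ Suc M) / (1 - e) + e ^ Suc M" using Suc.IH by simp
    also have "\<dots> = (e - e ^ Suc (Suc M)) / (1 - e)"
      using assms by (simp add: field_simps del: power_Suc) (simp add: algebra_simps)
    finally show ?case .
  qed
  also have "\<dots> \<le> e / (1 - e)" using assms by (simp add: divide_right_mono)
  finally show ?thesis .
qed

lemma term_bound:
  fixes a e :: real
  assumes e: "0 \<le> e" "e < 1" and aT: "\<bar>a\<bar> ^ T \<le> e"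
  shows "(\<Sum>r=1..N-1. real (N - r) * a ^ (r * T)) \<le> real N * (e / (1 - e))"
proof -
  have "(\<Sum>r=1..N-1. real (N - r) * a ^ (r * T)) \<le> (\<Sum>r=1..N-1. real N * e ^ r)"
  proof (rule sum_mono)
    fix r assume r: "r \<in> {1..N-1}"
    have "a ^ (r * T) \<le> \<bar>a\<bar> ^ (r * T)" by (metis abs_ge_self power_abs)
    also have "\<dots> = (\<bar>a\<bar> ^ T) ^ r" by (simp add: power_mult mult.commute)
    also have "\<dots> \<le> e ^ r" by (rule power_mono[OF aT]) simp
    finally have "a ^ (r * T) \<le> e ^ r" .
    then have "real (N - r) * a ^ (r * T) \<le> real (N - r) * e ^ r" by (simp add: mult_left_mono)
    also have "\<dots> \<le> real N * e ^ r" using e by (intro mult_right_mono) auto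
    finally show "real (N - r) * a ^ (r * T) \<le> real N * e ^ r" .
  qed
  also have "\<dots> = real N * (\<Sum>r=1..N-1. e ^ r)" by (simp add: sum_distrib_left)
  also have "\<dots> \<le> real N * (e / (1 - e))" by (intro mult_left_mono geom_bound e) simp
  finally show ?thesis .
qed




lemma (in prob_space) gauss_facts:
  fixes Z :: "'a \<Rightarrow> real"
  assumes s: "0 < \<sigma>" and D: "distributed M lborel Z (normal_density 0 \<sigma>)"
  shows "integrable M Z" "integrable M (\<lambda>x. (Z x)\<^sup>2)" "expectation Z = 0"
    "expectation (\<lambda>x. (Z x)\<^sup>2) = \<sigma>\<^sup>2"
proof -
  show i1: "integrable M Z"
    using distributed_integrable_var[OF D _ integrable_normal_moment_nz_1[OF s]] normal_density_nonneg by simp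
  have "integrable lborel (\<lambda>x. normal_density 0 \<sigma> x * x\<^sup>2)"
    using integrable_normal_moment[where \<mu>=0 and \<sigma>=\<sigma> and k=2] s by simp
  moreover have "integrable lborel (\<lambda>x. normal_density 0 \<sigma> x * x\<^sup>2) = integrable M (\<lambda>x. (Z x)\<^sup>2)"
    by (rule distributed_integrable[OF D]) (auto simp: normal_density_nonneg)
  ultimately show i2: "integrable M (\<lambda>x. (Z x)\<^sup>2)" by simp
  show e: "expectation Z = 0" by (rule normal_distributed_expectation[OF s D])
  have "variance Z = \<sigma>\<^sup>2" by (rule normal_distributed_variance[OF s D])
  then show "expectation (\<lambda>x. (Z x)\<^sup>2) = \<sigma>\<^sup>2"
    using variance_eq[OF i1 i2] e by simp
qed

lemma (in prob_space) sq_int_integrable: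
  fixes f :: "'a \<Rightarrow> real"
  assumes "f \<in> borel_measurable M" "integrable M (\<lambda>x. (f x)\<^sup>2)"
  shows "integrable M f"
proof (rule Bochner_Integration.integrable_bound)
  show "integrable M (\<lambda>x. 1 + (f x)\<^sup>2)" using assms by simp
  show "AE x in M. norm (f x) \<le> norm (1 + (f x)\<^sup>2)"
  proof
    fix x
    have "\<bar>f x\<bar> \<le> 1 + (f x)\<^sup>2"
    proof (cases "\<bar>f x\<bar> \<le> 1")
      case True
      then show ?thesis using zero_le_power2[of "f x"] by linarith
    next
      case False
      then have "\<bar>f x\<bar> * 1 \<le> \<bar>f x\<bar> * \<bar>f x\<bar>" by (intro mult_left_mono) auto
      also have "\<dots> = (f x)\<^sup>2" by (simp add: power2_eq_square abs_mult_self_eq)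
      finally show ?thesis by simp
    qed
    then show "norm (f x) \<le> norm (1 + (f x)\<^sup>2)" by simp
  qed
qed (use assms in auto)

lemma sq_int_mult:
  fixes f g :: "'a \<Rightarrow> real"
  assumes "f \<in> borel_measurable M" "g \<in> borel_measurable M"
    "integrable M (\<lambda>x. (f x)\<^sup>2)" "integrable M (\<lambda>x. (g x)\<^sup>2)"
  shows "integrable M (\<lambda>x. f x * g x)"
proof (rule Bochner_Integration.integrable_bound)
  show "integrable M (\<lambda>x. (f x)\<^sup>2 + (g x)\<^sup>2)" using assms by simp
  show "AE x in M. norm (f x * g x) \<le> norm ((f x)\<^sup>2 + (g x)\<^sup>2)"
  proof
    fix x
    have "0 \<le> (\<bar>f x\<bar> - \<bar>g x\<bar>)\<^sup>2" by simp
    then have "2 * (\<bar>f x\<bar> * \<bar>g x\<bar>) \<le> (f x)\<^sup>2 + (g x)\<^sup>2"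
      unfolding power2_diff by simp
    moreover have "0 \<le> \<bar>f x\<bar> * \<bar>g x\<bar>" by simp
    ultimately have "\<bar>f x * g x\<bar> \<le> (f x)\<^sup>2 + (g x)\<^sup>2"
      unfolding abs_mult by linarith
    then show "norm (f x * g x) \<le> norm ((f x)\<^sup>2 + (g x)\<^sup>2)" by simp
  qed
qed (use assms in auto)

lemma sq_int_add:
  fixes f g :: "'a \<Rightarrow> real"
  assumes "f \<in> borel_measurable M" "g \<in> borel_measurable M"
    "integrable M (\<lambda>x. (f x)\<^sup>2)" "integrable M (\<lambda>x. (g x)\<^sup>2)"
  shows "integrable M (\<lambda>x. (f x + g x)\<^sup>2)"
proof -
  have "integrable M (\<lambda>x. (f x)\<^sup>2 + (g x)\<^sup>2 + 2 * (f x * g x))"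
    using sq_int_mult[OF assms] assms by simp
  then show ?thesis by (simp add: power2_sum mult.assoc)
qed

lemma sq_int_scale:
  fixes f :: "'a \<Rightarrow> real"
  assumes "integrable M (\<lambda>x. (f x)\<^sup>2)"
  shows "integrable M (\<lambda>x. (c * f x)\<^sup>2)"
  using integrable_mult_right[OF assms, of "c\<^sup>2"] by (simp add: power_mult_distrib)

lemma (in prob_space) indep_lin_zero:
  fixes X :: "nat option \<Rightarrow> 'a \<Rightarrow> real"
  assumes ind: "indep_vars (\<lambda>_. borel) X UNIV"
    and I: "finite I" "\<And>i. i \<in> I \<Longrightarrow> f i \<noteq> j"
    and int1: "integrable M (\<lambda>\<omega>. c0 * X None \<omega> + (\<Sum>i\<in>I. c i * X (Some (f i)) \<omega>))"
    and int2: "integrable M (X (Some j))" and e0: "expectation (X (Some j)) = 0"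
  shows "expectation (\<lambda>\<omega>. (c0 * X None \<omega> + (\<Sum>i\<in>I. c i * X (Some (f i)) \<omega>)) * X (Some j) \<omega>) = 0"
proof -
  define S where "S = insert None (Some ` f ` I)"
  define F where "F = (\<lambda>t::nat option \<Rightarrow> real. c0 * t None + (\<Sum>i\<in>I. c i * t (Some (f i))))"
  have iv: "indep_var (PiM S (\<lambda>_. borel)) (\<lambda>\<omega>. restrict (\<lambda>i. X i \<omega>) S)
                      (PiM {Some j} (\<lambda>_. borel)) (\<lambda>\<omega>. restrict (\<lambda>i. X i \<omega>) {Some j})"
    by (rule indep_var_restrict[OF ind]) (use I in \<open>auto simp: S_def\<close>)
  have mF: "F \<in> borel_measurable (PiM S (\<lambda>_. borel))"
    unfolding F_def S_def by measurable
  have mG: "(\<lambda>t. t (Some j)) \<in> borel_measurable (PiM {Some j} (\<lambda>_. borel :: real measure))"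
    by measurable
  have iv2: "indep_var borel (F \<circ> (\<lambda>\<omega>. restrict (\<lambda>i. X i \<omega>) S)) borel
      ((\<lambda>t. t (Some j)) \<circ> (\<lambda>\<omega>. restrict (\<lambda>i. X i \<omega>) {Some j}))"
    by (rule indep_var_compose[OF iv mF mG])
  have e1: "(F \<circ> (\<lambda>\<omega>. restrict (\<lambda>i. X i \<omega>) S)) = (\<lambda>\<omega>. c0 * X None \<omega> + (\<Sum>i\<in>I. c i * X (Some (f i)) \<omega>))"
    by (auto simp: F_def S_def fun_eq_iff intro!: sum.cong)
  have e2: "((\<lambda>t. t (Some j)) \<circ> (\<lambda>\<omega>. restrict (\<lambda>i. X i \<omega>) {Some j})) = X (Some j)"
    by (auto simp: fun_eq_iff)
  have "indep_var borel (\<lambda>\<omega>. c0 * X None \<omega> + (\<Sum>i\<in>I. c i * X (Some (f i)) \<omega>)) borel (X (Some j))"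
    using iv2 unfolding e1 e2 .
  from indep_var_lebesgue_integral[OF this int1 int2] e0 show ?thesis by simp
qed




definition Gp :: "real \<Rightarrow> real \<Rightarrow> (nat option \<Rightarrow> 'a \<Rightarrow> real) \<Rightarrow> nat \<Rightarrow> nat \<Rightarrow> 'a \<Rightarrow> real" where
  "Gp a \<eta> X p n \<omega> = (\<Sum>i<n. (\<eta> * a ^ (n - 1 - i)) * X (Some (p + i)) \<omega>)"

lemma Gp_0[simp]: "Gp a \<eta> X p 0 \<omega> = 0" by (simp add: Gp_def)

lemma Gp_Suc: "Gp a \<eta> X p (Suc n) \<omega> = a * Gp a \<eta> X p n \<omega> + \<eta> * X (Some (p + n)) \<omega>"
proof -
  have "Gp a \<eta> X p (Suc n) \<omega> = (\<Sum>i<n. (\<eta> * a ^ (n - i)) * X (Some (p + i)) \<omega>) + \<eta> * X (Some (p + n)) \<omega>"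
    by (simp add: Gp_def)
  also have "(\<Sum>i<n. (\<eta> * a ^ (n - i)) * X (Some (p + i)) \<omega>) = a * Gp a \<eta> X p n \<omega>"
    unfolding Gp_def sum_distrib_left
  proof (rule sum.cong[OF refl])
    fix i assume "i \<in> {..<n}"
    then have "n - i = Suc (n - 1 - i)" by auto
    then show "\<eta> * a ^ (n - i) * X (Some (p + i)) \<omega> = a * (\<eta> * a ^ (n - 1 - i) * X (Some (p + i)) \<omega>)"
      by simp
  qed
  finally show ?thesis .
qed

context prob_space
begin

context
  fixes X :: "nat option \<Rightarrow> 'a \<Rightarrow> real" and Y :: "nat \<Rightarrow> 'a \<Rightarrow> real"
    and a \<eta> \<sigma> :: real and k0 :: nat
  assumes ind: "indep_vars (\<lambda>_. borel) X UNIV"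
  and Y0: "\<And>\<omega>. \<omega> \<in> space M \<Longrightarrow> Y 0 \<omega> = X None \<omega>"
  and rec: "\<And>k \<omega>. \<omega> \<in> space M \<Longrightarrow> Y (Suc k) \<omega> = a * Y k \<omega> + \<eta> * X (Some k) \<omega>"
  and gauss: "\<And>k. distributed M lborel (X (Some k)) (normal_density 0 \<sigma>)"
  and sig: "0 < \<sigma>" and a1: "\<bar>a\<bar> < 1"
  and stat: "\<And>s (h::real \<Rightarrow> real). h \<in> borel_measurable borel \<Longrightarrow> (\<integral>\<omega>. h (Y (k0 + s) \<omega>) \<partial>M) = (\<integral>\<omega>. h (Y k0 \<omega>) \<partial>M)"
begin

lemma Xm[measurable]: "X i \<in> borel_measurable M"
  using ind by (auto simp: indep_vars_def)

lemma xi_int: "integrable M (X (Some k))" "integrable M (\<lambda>x. (X (Some k) x)\<^sup>2)"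
  "expectation (X (Some k)) = 0" "expectation (\<lambda>x. (X (Some k) x)\<^sup>2) = \<sigma>\<^sup>2"
  using gauss_facts[OF sig gauss[of k]] by auto

lemma cf: "\<omega> \<in> space M \<Longrightarrow> Y (p + n) \<omega> = a ^ n * Y p \<omega> + Gp a \<eta> X p n \<omega>"
proof (induction n)
  case 0 then show ?case by simp
next
  case (Suc n)
  have "Y (p + Suc n) \<omega> = a * Y (p + n) \<omega> + \<eta> * X (Some (p + n)) \<omega>"
    using rec[OF Suc.prems, of "p + n"] by simp
  also have "\<dots> = a ^ Suc n * Y p \<omega> + Gp a \<eta> X p (Suc n) \<omega>"
    using Suc by (simp add: Gp_Suc algebra_simps)
  finally show ?case .
qed

lemma cf0: "\<omega> \<in> space M \<Longrightarrow> Y p \<omega> = a ^ p * X None \<omega> + Gp a \<eta> X 0 p \<omega>"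
  using cf[of \<omega> 0 p] Y0 by simp

lemma Gm[measurable]: "Gp a \<eta> X p n \<in> borel_measurable M"
  unfolding Gp_def[abs_def] by measurable

lemma Ym[measurable]: "Y p \<in> borel_measurable M"
proof -
  have "(\<lambda>\<omega>. a ^ p * X None \<omega> + Gp a \<eta> X 0 p \<omega>) \<in> borel_measurable M" by measurable
  then show ?thesis by (rule measurable_cong[THEN iffD1, rotated]) (simp add: cf0)
qed

lemma G_int: "integrable M (Gp a \<eta> X p n)"
  unfolding Gp_def[abs_def] by (auto intro!: Bochner_Integration.integrable_sum integrable_mult_right xi_int)

lemma G_sq: "integrable M (\<lambda>\<omega>. (Gp a \<eta> X p n \<omega>)\<^sup>2)"
proof (induction n)
  case 0 then show ?case by simp
next
  case (Suc n)
  have "integrable M (\<lambda>\<omega>. (a * Gp a \<eta> X p n \<omega> + \<eta> * X (Some (p + n)) \<omega>)\<^sup>2)"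
    by (rule sq_int_add) (auto intro!: sq_int_scale Suc xi_int)
  then show ?case by (simp add: Gp_Suc)
qed

lemma G_cross: "expectation (\<lambda>\<omega>. Gp a \<eta> X p n \<omega> * X (Some (p + n)) \<omega>) = 0"
proof -
  have "expectation (\<lambda>\<omega>. (0 * X None \<omega> + (\<Sum>i\<in>{..<n}. (\<eta> * a ^ (n - 1 - i)) * X (Some (p + i)) \<omega>)) * X (Some (p + n)) \<omega>) = 0"
    by (rule indep_lin_zero[OF ind]) (use G_int[of p n] xi_int in \<open>auto simp: Gp_def[abs_def]\<close>)
  then show ?thesis by (simp add: Gp_def)
qed

lemma Y_cross:
  assumes "p \<le> j" "integrable M (Y p)"
  shows "expectation (\<lambda>\<omega>. Y p \<omega> * X (Some j) \<omega>) = 0"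
proof -
  have eq: "\<And>\<omega>. \<omega> \<in> space M \<Longrightarrow> Y p \<omega> = a ^ p * X None \<omega> + (\<Sum>i\<in>{..<p}. (\<eta> * a ^ (p - 1 - i)) * X (Some (0 + i)) \<omega>)"
    using cf0 by (simp add: Gp_def)
  have "integrable M (Y p) = integrable M (\<lambda>\<omega>. a ^ p * X None \<omega> + (\<Sum>i\<in>{..<p}. (\<eta> * a ^ (p - 1 - i)) * X (Some (0 + i)) \<omega>))"
    by (rule Bochner_Integration.integrable_cong) (simp_all add: eq)
  then have "integrable M (\<lambda>\<omega>. a ^ p * X None \<omega> + (\<Sum>i\<in>{..<p}. (\<eta> * a ^ (p - 1 - i)) * X (Some (0 + i)) \<omega>))"
    using assms(2) by blast
  then have "expectation (\<lambda>\<omega>. (a ^ p * X None \<omega> + (\<Sum>i\<in>{..<p}. (\<eta> * a ^ (p - 1 - i)) * X (Some (0 + i)) \<omega>)) * X (Some j) \<omega>) = 0"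
    by (intro indep_lin_zero[OF ind]) (use assms(1) xi_int in auto)
  moreover have "expectation (\<lambda>\<omega>. Y p \<omega> * X (Some j) \<omega>) = expectation (\<lambda>\<omega>. (a ^ p * X None \<omega> + (\<Sum>i\<in>{..<p}. (\<eta> * a ^ (p - 1 - i)) * X (Some (0 + i)) \<omega>)) * X (Some j) \<omega>)"
    by (rule Bochner_Integration.integral_cong) (simp_all add: eq)
  ultimately show ?thesis by simp
qed

lemma sq_step:
  assumes Um: "U \<in> borel_measurable M" and U2: "integrable M (\<lambda>\<omega>. (U \<omega>)\<^sup>2)"
    and c0: "expectation (\<lambda>\<omega>. U \<omega> * X (Some j) \<omega>) = 0"
  shows "integrable M (\<lambda>\<omega>. (c * U \<omega> + \<eta> * X (Some j) \<omega>)\<^sup>2)"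
    "expectation (\<lambda>\<omega>. (c * U \<omega> + \<eta> * X (Some j) \<omega>)\<^sup>2) = c\<^sup>2 * expectation (\<lambda>\<omega>. (U \<omega>)\<^sup>2) + \<eta>\<^sup>2 * \<sigma>\<^sup>2"
proof -
  note Um[measurable]
  show "integrable M (\<lambda>\<omega>. (c * U \<omega> + \<eta> * X (Some j) \<omega>)\<^sup>2)"
    by (rule sq_int_add) (auto intro!: sq_int_scale U2 xi_int)
  have i3: "integrable M (\<lambda>\<omega>. U \<omega> * X (Some j) \<omega>)"
    by (rule sq_int_mult) (auto intro!: U2 xi_int Um)
  have "(\<lambda>\<omega>. (c * U \<omega> + \<eta> * X (Some j) \<omega>)\<^sup>2) = (\<lambda>\<omega>. c\<^sup>2 * (U \<omega>)\<^sup>2 + (2 * c * \<eta>) * (U \<omega> * X (Some j) \<omega>) + \<eta>\<^sup>2 * (X (Some j) \<omega>)\<^sup>2)"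
    by (simp add: fun_eq_iff power2_eq_square algebra_simps)
  then show "expectation (\<lambda>\<omega>. (c * U \<omega> + \<eta> * X (Some j) \<omega>)\<^sup>2) = c\<^sup>2 * expectation (\<lambda>\<omega>. (U \<omega>)\<^sup>2) + \<eta>\<^sup>2 * \<sigma>\<^sup>2"
    using U2 i3 xi_int[of j] c0 by simp
qed


lemma a2: "a\<^sup>2 < 1" using a1 by (simp add: abs_square_less_1)

lemma V_eq: "a\<^sup>2 * (\<eta>\<^sup>2 * \<sigma>\<^sup>2 / (1 - a\<^sup>2)) + \<eta>\<^sup>2 * \<sigma>\<^sup>2 = \<eta>\<^sup>2 * \<sigma>\<^sup>2 / (1 - a\<^sup>2)"
  using a2 by (simp add: field_simps)

lemma V_nonneg: "0 \<le> \<eta>\<^sup>2 * \<sigma>\<^sup>2 / (1 - a\<^sup>2)"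
  using a2 by simp

lemma G_bound: "expectation (\<lambda>\<omega>. (Gp a \<eta> X p n \<omega>)\<^sup>2) \<le> \<eta>\<^sup>2 * \<sigma>\<^sup>2 / (1 - a\<^sup>2)"
proof (induction n)
  case 0 then show ?case using V_nonneg by simp
next
  case (Suc n)
  have "expectation (\<lambda>\<omega>. (Gp a \<eta> X p (Suc n) \<omega>)\<^sup>2) = expectation (\<lambda>\<omega>. (a * Gp a \<eta> X p n \<omega> + \<eta> * X (Some (p + n)) \<omega>)\<^sup>2)"
    by (simp add: Gp_Suc)
  also have "\<dots> = a\<^sup>2 * expectation (\<lambda>\<omega>. (Gp a \<eta> X p n \<omega>)\<^sup>2) + \<eta>\<^sup>2 * \<sigma>\<^sup>2"
    by (rule sq_step(2)[OF Gm G_sq G_cross])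
  also have "\<dots> \<le> a\<^sup>2 * (\<eta>\<^sup>2 * \<sigma>\<^sup>2 / (1 - a\<^sup>2)) + \<eta>\<^sup>2 * \<sigma>\<^sup>2"
    using mult_left_mono[OF Suc.IH, of "a\<^sup>2"] by simp
  also have "\<dots> = \<eta>\<^sup>2 * \<sigma>\<^sup>2 / (1 - a\<^sup>2)" by (rule V_eq)
  finally show ?case .
qed

lemma min_ineq:
  fixes b c K :: real
  shows "min ((b + c)\<^sup>2) K \<le> min K (2 * b\<^sup>2) + 2 * c\<^sup>2"
proof -
  have "0 \<le> (b - c)\<^sup>2" by simp
  then have "(b + c)\<^sup>2 \<le> 2 * b\<^sup>2 + 2 * c\<^sup>2" by (simp add: power2_diff power2_sum)
  moreover have "0 \<le> 2 * c\<^sup>2" by simp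
  moreover have "min ((b + c)\<^sup>2) K \<le> (b + c)\<^sup>2" "min ((b + c)\<^sup>2) K \<le> K" by auto
  ultimately have "min ((b + c)\<^sup>2) K \<le> K + 2 * c\<^sup>2" "min ((b + c)\<^sup>2) K \<le> 2 * b\<^sup>2 + 2 * c\<^sup>2"
    by linarith+
  then show ?thesis by (simp add: min_add_distrib_right)
qed

lemma trunc_bound:
  assumes K: "0 \<le> K"
  shows "expectation (\<lambda>\<omega>. min ((Y k0 \<omega>)\<^sup>2) K) \<le> 2 * (\<eta>\<^sup>2 * \<sigma>\<^sup>2 / (1 - a\<^sup>2))"
proof -
  define V2 where "V2 = 2 * (\<eta>\<^sup>2 * \<sigma>\<^sup>2 / (1 - a\<^sup>2))"
  define s where "s n \<omega> = min K (2 * (a ^ n)\<^sup>2 * (Y k0 \<omega>)\<^sup>2)" for n \<omega>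
  have sm[measurable]: "s n \<in> borel_measurable M" for n unfolding s_def[abs_def] by measurable
  have s_bd: "norm (s n \<omega>) \<le> K" for n \<omega>
    using K by (simp add: s_def)
  have s_int: "integrable M (s n)" for n
    by (rule integrable_const_bound[where B=K]) (use s_bd in auto)
  have hm: "(\<lambda>x::real. min (x\<^sup>2) K) \<in> borel_measurable borel" by measurable
  have step: "expectation (\<lambda>\<omega>. min ((Y k0 \<omega>)\<^sup>2) K) \<le> expectation (s n) + V2" for n
  proof -
    have "expectation (\<lambda>\<omega>. min ((Y k0 \<omega>)\<^sup>2) K) = expectation (\<lambda>\<omega>. min ((Y (k0 + n) \<omega>)\<^sup>2) K)"
      using stat[OF hm, of n] by simp
    also have "\<dots> \<le> expectation (\<lambda>\<omega>. s n \<omega> + 2 * (Gp a \<eta> X k0 n \<omega>)\<^sup>2)"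
    proof (rule integral_mono)
      show "integrable M (\<lambda>\<omega>. min ((Y (k0 + n) \<omega>)\<^sup>2) K)"
        by (rule integrable_const_bound[where B=K]) (use K in auto)
      show "integrable M (\<lambda>\<omega>. s n \<omega> + 2 * (Gp a \<eta> X k0 n \<omega>)\<^sup>2)"
        using s_int G_sq by simp
      fix \<omega> assume \<omega>: "\<omega> \<in> space M"
      show "min ((Y (k0 + n) \<omega>)\<^sup>2) K \<le> s n \<omega> + 2 * (Gp a \<eta> X k0 n \<omega>)\<^sup>2"
        using min_ineq[of "a ^ n * Y k0 \<omega>" "Gp a \<eta> X k0 n \<omega>" K] cf[OF \<omega>, of k0 n]
        by (simp add: s_def power_mult_distrib)
    qed
    also have "\<dots> = expectation (s n) + 2 * expectation (\<lambda>\<omega>. (Gp a \<eta> X k0 n \<omega>)\<^sup>2)"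
      using s_int G_sq by simp
    also have "\<dots> \<le> expectation (s n) + V2"
      using G_bound[of k0 n] by (simp add: V2_def)
    finally show ?thesis .
  qed
  have lim: "(\<lambda>n. expectation (s n)) \<longlonglongrightarrow> expectation (\<lambda>_. 0::real)"
  proof (rule integral_dominated_convergence[where w="\<lambda>_. K"])
    show "AE \<omega> in M. (\<lambda>n. s n \<omega>) \<longlonglongrightarrow> 0"
    proof (rule AE_I2)
      fix \<omega>
      have eq: "(\<lambda>n. (a ^ n)\<^sup>2) = (\<lambda>n. (a\<^sup>2) ^ n)"
        by (simp add: fun_eq_iff power_mult[symmetric] mult.commute)
      have "(\<lambda>n. (a ^ n)\<^sup>2) \<longlonglongrightarrow> 0" unfolding eq by (rule LIMSEQ_power_zero) (use a2 in simp)
      then have "(\<lambda>n. 2 * (a ^ n)\<^sup>2 * (Y k0 \<omega>)\<^sup>2) \<longlonglongrightarrow> 2 * 0 * (Y k0 \<omega>)\<^sup>2"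
        by (intro tendsto_intros)
      then have "(\<lambda>n. min K (2 * (a ^ n)\<^sup>2 * (Y k0 \<omega>)\<^sup>2)) \<longlonglongrightarrow> min K (2 * 0 * (Y k0 \<omega>)\<^sup>2)"
        by (rule tendsto_min[OF tendsto_const])
      then show "(\<lambda>n. s n \<omega>) \<longlonglongrightarrow> 0" using K by (simp add: s_def[abs_def])
    qed
  qed (use s_bd in auto)
  then have "(\<lambda>n. expectation (s n) + V2) \<longlonglongrightarrow> V2"
    using tendsto_add[OF lim tendsto_const[of V2]] by simp
  then show ?thesis unfolding V2_def[symmetric]
    by (rule LIMSEQ_le_const) (use step in auto)
qed

lemma SUP_min_ennreal: "0 \<le> y \<Longrightarrow> (SUP m::nat. ennreal (min y (real m))) = ennreal y"
proof (rule antisym)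
  show "(SUP m::nat. ennreal (min y (real m))) \<le> ennreal y"
    by (rule SUP_least) (simp add: ennreal_leI)
  obtain m :: nat where "y \<le> real m" using real_arch_simple by blast
  then show "ennreal y \<le> (SUP m::nat. ennreal (min y (real m)))"
    by (intro SUP_upper2[of m]) auto
qed

lemma Y_fin: "integrable M (\<lambda>\<omega>. (Y k0 \<omega>)\<^sup>2)"
proof (rule integrableI_nonneg)
  show "(\<lambda>\<omega>. (Y k0 \<omega>)\<^sup>2) \<in> borel_measurable M" by measurable
  show "AE x in M. 0 \<le> (Y k0 x)\<^sup>2" by simp
  define V2 where "V2 = 2 * (\<eta>\<^sup>2 * \<sigma>\<^sup>2 / (1 - a\<^sup>2))"
  have "(\<integral>\<^sup>+\<omega>. ennreal ((Y k0 \<omega>)\<^sup>2) \<partial>M) = (\<integral>\<^sup>+\<omega>. (SUP m::nat. ennreal (min ((Y k0 \<omega>)\<^sup>2) (real m))) \<partial>M)"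
    by (simp add: SUP_min_ennreal)
  also have "\<dots> = (SUP m::nat. \<integral>\<^sup>+\<omega>. ennreal (min ((Y k0 \<omega>)\<^sup>2) (real m)) \<partial>M)"
  proof (rule nn_integral_monotone_convergence_SUP)
    show "incseq (\<lambda>m \<omega>. ennreal (min ((Y k0 \<omega>)\<^sup>2) (real m)))"
      by (auto simp: incseq_def le_fun_def intro!: ennreal_leI)
  qed measurable
  also have "\<dots> \<le> ennreal V2"
  proof (rule SUP_least)
    fix m :: nat
    have int: "integrable M (\<lambda>\<omega>. min ((Y k0 \<omega>)\<^sup>2) (real m))"
      by (rule integrable_const_bound[where B="real m"]) auto
    have "(\<integral>\<^sup>+\<omega>. ennreal (min ((Y k0 \<omega>)\<^sup>2) (real m)) \<partial>M) = ennreal (expectation (\<lambda>\<omega>. min ((Y k0 \<omega>)\<^sup>2) (real m)))"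
      by (rule nn_integral_eq_integral[OF int]) auto
    also have "\<dots> \<le> ennreal V2"
      using trunc_bound[of "real m"] by (intro ennreal_leI) (simp add: V2_def)
    finally show "(\<integral>\<^sup>+\<omega>. ennreal (min ((Y k0 \<omega>)\<^sup>2) (real m)) \<partial>M) \<le> ennreal V2" .
  qed
  also have "\<dots> < \<infinity>" by simp
  finally show "(\<integral>\<^sup>+\<omega>. ennreal ((Y k0 \<omega>)\<^sup>2) \<partial>M) < \<infinity>" .
qed


lemma EY0: "expectation (\<lambda>\<omega>. (Y k0 \<omega>)\<^sup>2) = \<eta>\<^sup>2 * \<sigma>\<^sup>2 / (1 - a\<^sup>2)"
proof -
  have Yi: "integrable M (Y k0)" by (rule sq_int_integrable[OF Ym Y_fin])
  have c0: "expectation (\<lambda>\<omega>. Y k0 \<omega> * X (Some k0) \<omega>) = 0" by (rule Y_cross[OF le_refl Yi])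
  have sq: "(\<lambda>x::real. x\<^sup>2) \<in> borel_measurable borel" by measurable
  have "expectation (\<lambda>\<omega>. (Y k0 \<omega>)\<^sup>2) = expectation (\<lambda>\<omega>. (Y (k0 + 1) \<omega>)\<^sup>2)"
    using stat[OF sq, of 1] by simp
  also have "\<dots> = expectation (\<lambda>\<omega>. (a * Y k0 \<omega> + \<eta> * X (Some k0) \<omega>)\<^sup>2)"
    by (rule Bochner_Integration.integral_cong) (simp_all add: rec)
  also have "\<dots> = a\<^sup>2 * expectation (\<lambda>\<omega>. (Y k0 \<omega>)\<^sup>2) + \<eta>\<^sup>2 * \<sigma>\<^sup>2"
    by (rule sq_step(2)[OF Ym Y_fin c0])
  finally have "(1 - a\<^sup>2) * expectation (\<lambda>\<omega>. (Y k0 \<omega>)\<^sup>2) = \<eta>\<^sup>2 * \<sigma>\<^sup>2"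
    by (simp add: algebra_simps)
  then show ?thesis using a2 by (simp add: field_simps)
qed

lemma Yp_sq:
  assumes "k0 \<le> p"
  shows "integrable M (\<lambda>\<omega>. (Y p \<omega>)\<^sup>2)" "expectation (\<lambda>\<omega>. (Y p \<omega>)\<^sup>2) = \<eta>\<^sup>2 * \<sigma>\<^sup>2 / (1 - a\<^sup>2)"
proof -
  obtain n where p: "p = k0 + n" using assms le_Suc_ex by blast
  have "integrable M (\<lambda>\<omega>. (a ^ n * Y k0 \<omega> + Gp a \<eta> X k0 n \<omega>)\<^sup>2)"
    by (rule sq_int_add) (auto intro!: sq_int_scale Y_fin G_sq)
  moreover have "integrable M (\<lambda>\<omega>. (Y p \<omega>)\<^sup>2) = integrable M (\<lambda>\<omega>. (a ^ n * Y k0 \<omega> + Gp a \<eta> X k0 n \<omega>)\<^sup>2)"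
    by (rule Bochner_Integration.integrable_cong) (simp_all add: p cf)
  ultimately show "integrable M (\<lambda>\<omega>. (Y p \<omega>)\<^sup>2)" by simp
  have sq: "(\<lambda>x::real. x\<^sup>2) \<in> borel_measurable borel" by measurable
  show "expectation (\<lambda>\<omega>. (Y p \<omega>)\<^sup>2) = \<eta>\<^sup>2 * \<sigma>\<^sup>2 / (1 - a\<^sup>2)"
    using stat[OF sq, of n] EY0 by (simp add: p)
qed

lemma Y_cov:
  assumes "k0 \<le> p" "p \<le> q"
  shows "integrable M (\<lambda>\<omega>. Y p \<omega> * Y q \<omega>)"
    "expectation (\<lambda>\<omega>. Y p \<omega> * Y q \<omega>) = a ^ (q - p) * (\<eta>\<^sup>2 * \<sigma>\<^sup>2 / (1 - a\<^sup>2))"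
proof -
  have p2: "integrable M (\<lambda>\<omega>. (Y p \<omega>)\<^sup>2)" using Yp_sq(1)[OF assms(1)] .
  have q2: "integrable M (\<lambda>\<omega>. (Y q \<omega>)\<^sup>2)" using Yp_sq(1) assms by simp
  show "integrable M (\<lambda>\<omega>. Y p \<omega> * Y q \<omega>)" by (rule sq_int_mult[OF Ym Ym p2 q2])
  have Yi: "integrable M (Y p)" by (rule sq_int_integrable[OF Ym p2])
  have xint: "integrable M (\<lambda>\<omega>. Y p \<omega> * X (Some j) \<omega>)" for j
    by (rule sq_int_mult) (auto intro: p2 xi_int)
  define m where "m = q - p"
  have q: "q = p + m" using assms m_def by simp
  have "expectation (\<lambda>\<omega>. Y p \<omega> * Y q \<omega>) =
        expectation (\<lambda>\<omega>. a ^ m * (Y p \<omega>)\<^sup>2 + (\<Sum>i<m. (\<eta> * a ^ (m - 1 - i)) * (Y p \<omega> * X (Some (p + i)) \<omega>)))"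
  proof (rule Bochner_Integration.integral_cong[OF refl])
    fix \<omega> assume \<omega>: "\<omega> \<in> space M"
    have "Y q \<omega> = a ^ m * Y p \<omega> + Gp a \<eta> X p m \<omega>" using cf[OF \<omega>, of p m] q by simp
    then show "Y p \<omega> * Y q \<omega> = a ^ m * (Y p \<omega>)\<^sup>2 + (\<Sum>i<m. (\<eta> * a ^ (m - 1 - i)) * (Y p \<omega> * X (Some (p + i)) \<omega>))"
      by (simp add: Gp_def power2_eq_square algebra_simps sum_distrib_left)
  qed
  also have "\<dots> = a ^ m * expectation (\<lambda>\<omega>. (Y p \<omega>)\<^sup>2) + (\<Sum>i<m. (\<eta> * a ^ (m - 1 - i)) * expectation (\<lambda>\<omega>. Y p \<omega> * X (Some (p + i)) \<omega>))"
    using p2 xint by (simp add: Bochner_Integration.integral_sum)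
  also have "\<dots> = a ^ m * expectation (\<lambda>\<omega>. (Y p \<omega>)\<^sup>2)"
    using Y_cross[OF _ Yi] by simp
  finally show "expectation (\<lambda>\<omega>. Y p \<omega> * Y q \<omega>) = a ^ (q - p) * (\<eta>\<^sup>2 * \<sigma>\<^sup>2 / (1 - a\<^sup>2))"
    using Yp_sq(2)[OF assms(1)] m_def by simp
qed

end
end



lemma grad_dir:
  fixes v wstar u x :: "real^'n" and H :: "real^'n^'n"
  assumes grad: "(river_loss l v wstar H has_derivative (\<lambda>h. gradL x \<bullet> h)) (at x)"
    and Su: "msqrt H *v u = sqrt lam *\<^sub>R u" and St: "transpose (msqrt H) = msqrt H"
    and uv: "u \<bullet> v = 0" and uu: "u \<bullet> u = 1" and lam: "0 \<le> lam"
  shows "gradL x \<bullet> u = lam * (u \<bullet> (x - wstar))"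
proof -
  define S where "S = msqrt H"
  define y where "y = projS v *v (x - wstar)"
  define A where "A = S *v y"
  define C where "C = l (v \<bullet> (x - wstar))"
  have PSu: "projS v *v u = u" using uv by (simp add: projS_apply inner_commute)
  have phi: "river_loss l v wstar H (x + t *\<^sub>R u) =
      C + 1/2 * (A \<bullet> A + 2 * (t * sqrt lam) * (A \<bullet> u) + (t * sqrt lam)\<^sup>2)" for t
  proof -
    have e1: "v \<bullet> (x + t *\<^sub>R u - wstar) = v \<bullet> (x - wstar)"
      using uv by (simp add: inner_diff_right inner_add_right inner_commute)
    have e2: "S *v (projS v *v (x + t *\<^sub>R u - wstar)) = A + (t * sqrt lam) *\<^sub>R u"
    proof -
      have "x + t *\<^sub>R u - wstar = (x - wstar) + t *\<^sub>R u" by (simp add: algebra_simps)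
      then have "projS v *v (x + t *\<^sub>R u - wstar) = y + t *\<^sub>R u"
        by (simp only: y_def matrix_vector_right_distrib matrix_vector_mult_scaleR PSu)
      then show ?thesis
        by (simp add: A_def matrix_vector_right_distrib matrix_vector_mult_scaleR S_def[symmetric] Su[folded S_def])
    qed
    have e3: "(norm (A + (t * sqrt lam) *\<^sub>R u))\<^sup>2 = A \<bullet> A + 2 * (t * sqrt lam) * (A \<bullet> u) + (t * sqrt lam)\<^sup>2"
      unfolding power2_norm_eq_inner
      by (simp add: inner_add_left inner_add_right uu inner_commute power2_eq_square algebra_simps lam)
    show ?thesis unfolding river_loss_def e1 S_def[symmetric] e2 e3 C_def ..
  qed
  have d1: "((\<lambda>t. river_loss l v wstar H (x + t *\<^sub>R u)) has_real_derivative (gradL x \<bullet> u)) (at 0)"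
  proof -
    have "((\<lambda>t::real. x + t *\<^sub>R u) has_derivative (\<lambda>t. t *\<^sub>R u)) (at 0)"
      by (auto intro!: derivative_eq_intros)
    from diff_chain_at[OF this] grad
    have "((river_loss l v wstar H \<circ> (\<lambda>t::real. x + t *\<^sub>R u)) has_derivative ((\<lambda>h. gradL x \<bullet> h) \<circ> (\<lambda>t. t *\<^sub>R u))) (at 0)"
      by simp
    moreover have "((\<lambda>h. gradL x \<bullet> h) \<circ> (\<lambda>t. t *\<^sub>R u)) = (\<lambda>t. (gradL x \<bullet> u) * t)"
      by (auto simp: fun_eq_iff)
    ultimately show ?thesis by (simp add: has_field_derivative_def comp_def)
  qed
  have d2: "((\<lambda>t. river_loss l v wstar H (x + t *\<^sub>R u)) has_real_derivative (sqrt lam * (A \<bullet> u))) (at 0)"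
    unfolding phi by (auto intro!: derivative_eq_intros)
  have "gradL x \<bullet> u = sqrt lam * (A \<bullet> u)" using DERIV_unique[OF d1 d2] .
  also have "A \<bullet> u = sqrt lam * (y \<bullet> u)"
    unfolding A_def by (simp add: transpose_inner St[folded S_def] Su[folded S_def])
  also have "y \<bullet> u = u \<bullet> (x - wstar)"
    unfolding y_def using uv by (simp add: projS_apply inner_diff_left inner_diff_right inner_commute)
  finally show ?thesis using lam by (simp add: mult.assoc[symmetric])
qed


theorem theorem1:
  fixes M :: "'a measure"
    and v wstar :: "real^'n"
    and H :: "real^'n^'n"
    and l l' l'' :: "real \<Rightarrow> real"
    and gradL :: "real^'n \<Rightarrow> real^'n"
    and lam :: "nat \<Rightarrow> real"
    and u :: "nat \<Rightarrow> real^'n"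
    and \<mu> LS \<eta> \<mu>F \<sigma> :: real
    and T N k0 :: nat
    and w g :: "nat \<Rightarrow> 'a \<Rightarrow> real^'n"
  assumes dim: "CARD('n) \<ge> 2"
    and v_unit: "norm v = 1"
    and l_C2: "\<And>x. (l has_real_derivative l' x) (at x)"
              "\<And>x. (l' has_real_derivative l'' x) (at x)"
              "continuous_on UNIV l''"
    and H_psd: "psd H"
    and H_PF: "H ** projF v = 0"
    and H_PS: "H ** projS v = H" "projS v ** H = H"
    and eig: "\<And>i j. i \<in> {1..CARD('n)-1} \<Longrightarrow> j \<in> {1..CARD('n)-1} \<Longrightarrow>
                 u i \<bullet> u j = (if i = j then 1 else 0)"
             "\<And>j. j \<in> {1..CARD('n)-1} \<Longrightarrow> u j \<bullet> v = 0"
             "\<And>j. j \<in> {1..CARD('n)-1} \<Longrightarrow> H *v u j = lam j *\<^sub>R u j"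
    and eig_range: "\<And>j. j \<in> {1..CARD('n)-1} \<Longrightarrow> \<mu> \<le> lam j \<and> lam j \<le> LS"
    and mu_pos: "0 < \<mu>" and mu_LS: "\<mu> \<le> LS"
    and eta: "0 < \<eta>" "\<eta> < 2 / LS"
    and muF: "0 < \<mu>F" and sigma: "0 < \<sigma>"
    and grad: "\<And>x. (river_loss l v wstar H has_derivative (\<lambda>h. gradL x \<bullet> h)) (at x)"
    and M: "prob_space M"
    and w_rv: "\<And>k. w k \<in> borel_measurable M"
    and noise_gauss: "\<And>k. centred_gaussian_vector M (g k) (\<sigma>\<^sup>2 *\<^sub>R projS v)"
    and noise_indep: "prob_space.indep_vars M (\<lambda>_. borel)
                        (\<lambda>i. case i of None \<Rightarrow> w 0 | Some k \<Rightarrow> g k) UNIV"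
    and iter: "\<And>k \<omega>. \<omega> \<in> space M \<Longrightarrow>
                 w (Suc k) \<omega> = w k \<omega> - \<eta> *\<^sub>R gradL (w k \<omega>) - (\<eta> * \<mu>F) *\<^sub>R v + \<eta> *\<^sub>R g k \<omega>"
    and T: "T \<ge> 1" and N: "N \<ge> 1"
    and stat: "stationary_from M (\<lambda>k \<omega>. projS v *v (w k \<omega> - wstar)) k0"
  shows "(let wbar = (\<lambda>\<omega>. (1 / real N) *\<^sub>R (\<Sum>m<N. w (k0 + m * T) \<omega>));
              D = (\<lambda>x. norm (projS v *v (x - wstar)));
              ED = integral\<^sup>L M (\<lambda>\<omega>. (D (wbar \<omega>))\<^sup>2)
          in ED = (\<Sum>j = 1..CARD('n)-1.
                     (\<eta> * \<sigma>\<^sup>2 / (2 * lam j - \<eta> * (lam j)\<^sup>2)) * (1 / (real N)\<^sup>2) *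
                     (real N + 2 * (\<Sum>r = 1..N-1. real (N - r) * (1 - \<eta> * lam j) ^ (r * T))))
           \<and> (\<forall>\<epsilon>. 0 \<le> \<epsilon> \<and> \<epsilon> < 1 \<and> (\<forall>j \<in> {1..CARD('n)-1}. \<bar>1 - \<eta> * lam j\<bar> ^ T \<le> \<epsilon>) \<longrightarrow>
                 ED \<le> (1 / real N) * (1 + 2 * \<epsilon> / (1 - \<epsilon>)) *
                       (\<Sum>j = 1..CARD('n)-1. \<eta> * \<sigma>\<^sup>2 / (2 * lam j - \<eta> * (lam j)\<^sup>2))))"
proof -
  interpret P: prob_space M by (rule M)
  define J where "J = {1..CARD('n)-1}"
  have finJ: "finite J" unfolding J_def by simp
  have vv: "v \<bullet> v = 1" using v_unit by (metis norm_eq_sqrt_inner real_sqrt_eq_1_iff)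
  have orth: "\<And>i j. i \<in> J \<Longrightarrow> j \<in> J \<Longrightarrow> u i \<bullet> u j = (if i = j then 1 else 0)"
    using eig(1) unfolding J_def by blast
  have uv: "\<And>j. j \<in> J \<Longrightarrow> u j \<bullet> v = 0" using eig(2) unfolding J_def by blast
  have uu: "\<And>j. j \<in> J \<Longrightarrow> u j \<bullet> u j = 1" using orth by simp
  have Hu: "\<And>j. j \<in> J \<Longrightarrow> H *v u j = lam j *\<^sub>R u j" using eig(3) unfolding J_def by blast
  have Hv: "H *v v = 0"
  proof -
    have "(H ** projF v) *v v = 0" using H_PF by simp
    then show ?thesis by (simp add: matrix_vector_mul_assoc[symmetric] projF_apply vv)
  qed
  have LSpos: "0 < LS" using mu_pos mu_LS by simp
  have lampos: "\<And>j. j \<in> J \<Longrightarrow> 0 < lam j" using eig_range mu_pos unfolding J_def by (meson less_le_trans)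
  have eta_lam: "\<And>j. j \<in> J \<Longrightarrow> \<eta> * lam j < 2"
  proof -
    fix j assume j: "j \<in> J"
    have "\<eta> * lam j \<le> \<eta> * LS" using eig_range[of j] j eta unfolding J_def by (simp add: mult_left_mono)
    also have "\<dots> < 2" using eta LSpos by (simp add: field_simps)
    finally show "\<eta> * lam j < 2" .
  qed
  have Su: "\<And>j. j \<in> J \<Longrightarrow> msqrt H *v u j = sqrt (lam j) *\<^sub>R u j"
    by (rule msqrt_u[OF v_unit J_def orth uv Hu Hv lampos])
  have St: "transpose (msqrt H) = msqrt H"
    by (rule msqrt_sym[OF v_unit J_def orth uv Hu Hv lampos])
  have gdir: "\<And>j x. j \<in> J \<Longrightarrow> gradL x \<bullet> u j = lam j * (u j \<bullet> (x - wstar))"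
  proof -
    fix j x assume j: "j \<in> J"
    show "gradL x \<bullet> u j = lam j * (u j \<bullet> (x - wstar))"
      by (rule grad_dir[OF grad Su[OF j] St uv[OF j] uu[OF j]]) (use lampos[OF j] in simp)
  qed
  have gm[measurable]: "\<And>k. g k \<in> borel_measurable M"
    using noise_gauss by (simp add: centred_gaussian_vector_def)
  note w_rv[measurable]

  define Yj where "Yj j k \<omega> = u j \<bullet> (w k \<omega> - wstar)" for j k \<omega>
  define Xj where "Xj j i \<omega> = (case i of None \<Rightarrow> u j \<bullet> (w 0 \<omega> - wstar) | Some k \<Rightarrow> u j \<bullet> g k \<omega>)" for j i \<omega>
  define Vj where "Vj j = \<eta>\<^sup>2 * \<sigma>\<^sup>2 / (1 - (1 - \<eta> * lam j)\<^sup>2)" for j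

  have cov: "integrable M (\<lambda>\<omega>. Yj j p \<omega> * Yj j q \<omega>) \<and>
      P.expectation (\<lambda>\<omega>. Yj j p \<omega> * Yj j q \<omega>) = (1 - \<eta> * lam j) ^ (q - p) * Vj j"
    if j: "j \<in> J" and pq: "k0 \<le> p" "p \<le> q" for j p q
  proof -
    have ind: "P.indep_vars (\<lambda>_. borel) (Xj j) UNIV"
    proof -
      define Yf where "Yf i = (case i of None \<Rightarrow> (\<lambda>x. u j \<bullet> (x - wstar)) | Some k \<Rightarrow> (\<lambda>x. u j \<bullet> x))" for i :: "nat option"
      have "P.indep_vars (\<lambda>_. borel) (\<lambda>i x. Yf i ((case i of None \<Rightarrow> w 0 | Some k \<Rightarrow> g k) x)) UNIV"
        by (rule P.indep_vars_compose2[OF noise_indep]) (auto simp: Yf_def split: option.split)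
      moreover have "(\<lambda>i x. Yf i ((case i of None \<Rightarrow> w 0 | Some k \<Rightarrow> g k) x)) = Xj j"
        by (auto simp: fun_eq_iff Yf_def Xj_def split: option.split)
      ultimately show ?thesis by simp
    qed
    have Y0: "\<And>\<omega>. \<omega> \<in> space M \<Longrightarrow> Yj j 0 \<omega> = Xj j None \<omega>" by (simp add: Yj_def Xj_def)
    have rec: "\<And>k \<omega>. \<omega> \<in> space M \<Longrightarrow> Yj j (Suc k) \<omega> = (1 - \<eta> * lam j) * Yj j k \<omega> + \<eta> * Xj j (Some k) \<omega>"
    proof -
      fix k \<omega> assume \<omega>: "\<omega> \<in> space M"
      have "Yj j (Suc k) \<omega> = u j \<bullet> (w k \<omega> - wstar) - \<eta> * (gradL (w k \<omega>) \<bullet> u j) - \<eta> * \<mu>F * (u j \<bullet> v) + \<eta> * (u j \<bullet> g k \<omega>)"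
        unfolding Yj_def iter[OF \<omega>] by (simp add: inner_diff_right inner_add_right inner_commute algebra_simps)
      also have "\<dots> = (1 - \<eta> * lam j) * Yj j k \<omega> + \<eta> * Xj j (Some k) \<omega>"
        using uv[OF j] by (simp add: gdir[OF j] Yj_def Xj_def algebra_simps)
      finally show "Yj j (Suc k) \<omega> = (1 - \<eta> * lam j) * Yj j k \<omega> + \<eta> * Xj j (Some k) \<omega>" .
    qed
    have gauss: "\<And>k. distributed M lborel (Xj j (Some k)) (normal_density 0 \<sigma>)"
    proof -
      fix k
      have q: "u j \<bullet> ((\<sigma>\<^sup>2 *\<^sub>R projS v) *v u j) = \<sigma>\<^sup>2"
        using uv[OF j] uu[OF j]
        by (simp add: scaleR_matrix_vector_assoc[symmetric] projS_apply inner_diff_right inner_commute)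
      have "distributed M lborel (\<lambda>\<omega>. u j \<bullet> g k \<omega>) (\<lambda>x. ennreal (normal_density 0 (sqrt (u j \<bullet> ((\<sigma>\<^sup>2 *\<^sub>R projS v) *v u j))) x))"
        using noise_gauss[of k] q sigma unfolding centred_gaussian_vector_def by (metis power_not_zero less_irrefl)
      moreover have "Xj j (Some k) = (\<lambda>\<omega>. u j \<bullet> g k \<omega>)" by (simp add: fun_eq_iff Xj_def)
      ultimately show "distributed M lborel (Xj j (Some k)) (normal_density 0 \<sigma>)"
        using q sigma by simp
    qed
    have a1: "\<bar>1 - \<eta> * lam j\<bar> < 1" using eta_lam[OF j] lampos[OF j] eta by (simp add: abs_less_iff)
    have statj: "(\<integral>\<omega>. h (Yj j (k0 + s) \<omega>) \<partial>M) = (\<integral>\<omega>. h (Yj j k0 \<omega>) \<partial>M)"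
      if hm: "h \<in> borel_measurable borel" for s and h :: "real \<Rightarrow> real"
    proof -
      define Z where "Z k \<omega> = projS v *v (w k \<omega> - wstar)" for k \<omega>
      have Zeq: "Z k \<omega> = (w k \<omega> - wstar) - (v \<bullet> (w k \<omega> - wstar)) *\<^sub>R v" for k \<omega>
        by (simp add: Z_def projS_apply)
      have Zm: "Z k \<in> borel_measurable M" for k
        unfolding Zeq[abs_def] by measurable
      have uZ: "u j \<bullet> Z k \<omega> = Yj j k \<omega>" for k \<omega>
        using uv[OF j] by (simp add: Zeq Yj_def inner_diff_right)
      define F where "F p = h (u j \<bullet> p (0::nat))" for p :: "nat \<Rightarrow> real^'n"
      note hm[measurable]
      have Fm: "F \<in> borel_measurable (Pi\<^sub>M UNIV (\<lambda>_. borel))"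
        unfolding F_def[abs_def] by measurable
      have Tm: "(\<lambda>\<omega> i. Z (k0 + t + i) \<omega>) \<in> measurable M (Pi\<^sub>M UNIV (\<lambda>_. borel))" for t
        by (rule measurable_PiM_single') (auto intro: Zm)
      have st: "distr M (Pi\<^sub>M UNIV (\<lambda>_. borel)) (\<lambda>\<omega> i. Z (k0 + s + i) \<omega>)
          = distr M (Pi\<^sub>M UNIV (\<lambda>_. borel)) (\<lambda>\<omega> i. Z (k0 + i) \<omega>)"
        using stat unfolding stationary_from_def Z_def by blast
      have "(\<integral>\<omega>. h (Yj j (k0 + s) \<omega>) \<partial>M) = (\<integral>\<omega>. F (\<lambda>i. Z (k0 + s + i) \<omega>) \<partial>M)"
        by (simp add: F_def uZ)
      also have "\<dots> = integral\<^sup>L (distr M (Pi\<^sub>M UNIV (\<lambda>_. borel)) (\<lambda>\<omega> i. Z (k0 + s + i) \<omega>)) F"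
        by (rule integral_distr[symmetric, OF Tm Fm])
      also have "\<dots> = integral\<^sup>L (distr M (Pi\<^sub>M UNIV (\<lambda>_. borel)) (\<lambda>\<omega> i. Z (k0 + 0 + i) \<omega>)) F"
        using st by simp
      also have "\<dots> = (\<integral>\<omega>. F (\<lambda>i. Z (k0 + 0 + i) \<omega>) \<partial>M)"
        by (rule integral_distr[OF Tm Fm])
      also have "\<dots> = (\<integral>\<omega>. h (Yj j k0 \<omega>) \<partial>M)"
        by (simp add: F_def uZ)
      finally show ?thesis .
    qed
    show ?thesis
      using P.Y_cov[OF ind Y0 rec gauss sigma a1 statj pq] by (simp add: Vj_def)
  qed
  define c where "c m = k0 + m * T" for m
  define wbar where "wbar \<omega> = (1 / real N) *\<^sub>R (\<Sum>m<N. w (k0 + m * T) \<omega>)" for \<omega>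
  define Vs where "Vs j = \<eta> * \<sigma>\<^sup>2 / (2 * lam j - \<eta> * (lam j)\<^sup>2)" for j
  have Nne: "real N \<noteq> 0" using N by simp
  have Vj_eq: "Vj j = Vs j" if j: "j \<in> J" for j
  proof -
    have d: "1 - (1 - \<eta> * lam j)\<^sup>2 = \<eta> * (2 * lam j - \<eta> * (lam j)\<^sup>2)"
      by (simp add: power2_eq_square algebra_simps)
    show ?thesis unfolding Vj_def Vs_def d using eta by (simp add: power2_eq_square)
  qed
  have Vs_nonneg: "0 \<le> Vs j" if j: "j \<in> J" for j
  proof -
    have "0 < 2 - \<eta> * lam j" using eta_lam[OF j] by simp
    then have "0 < lam j * (2 - \<eta> * lam j)" using lampos[OF j] by simp
    then have "0 < 2 * lam j - \<eta> * (lam j)\<^sup>2" by (simp add: power2_eq_square algebra_simps)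
    then show ?thesis unfolding Vs_def using eta by simp
  qed
  have Dpt: "(norm (projS v *v (wbar \<omega> - wstar)))\<^sup>2 =
      (\<Sum>j\<in>J. (1 / real N)\<^sup>2 * (\<Sum>m<N. \<Sum>m'<N. Yj j (c m) \<omega> * Yj j (c m') \<omega>))" for \<omega>
  proof -
    define y where "y = projS v *v (wbar \<omega> - wstar)"
    have pars: "(norm y)\<^sup>2 = (v \<bullet> y)\<^sup>2 + (\<Sum>j\<in>J. (u j \<bullet> y)\<^sup>2)" by (rule parseval[OF v_unit J_def orth uv])
    have vy: "v \<bullet> y = 0" by (simp add: y_def projS_apply inner_diff_right vv)
    have wb: "wbar \<omega> - wstar = (1 / real N) *\<^sub>R (\<Sum>m<N. (w (c m) \<omega> - wstar))"
    proof -
      have s: "(\<Sum>m<N. (w (c m) \<omega> - wstar)) = (\<Sum>m<N. w (c m) \<omega>) - real N *\<^sub>R wstar"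
        by (simp only: sum_subtractf sum_constant_scaleR card_lessThan)
      show ?thesis unfolding s using Nne by (simp add: wbar_def c_def scaleR_diff_right)
    qed
    have uy: "(u j \<bullet> y)\<^sup>2 = (1 / real N)\<^sup>2 * (\<Sum>m<N. \<Sum>m'<N. Yj j (c m) \<omega> * Yj j (c m') \<omega>)" if j: "j \<in> J" for j
    proof -
      have "u j \<bullet> y = (1 / real N) * (\<Sum>m<N. Yj j (c m) \<omega>)"
        using uv[OF j] by (simp add: y_def projS_apply inner_diff_right wb inner_sum_right Yj_def)
      then show ?thesis by (simp add: power_mult_distrib power2_eq_square sum_product)
    qed
    show ?thesis using pars vy uy unfolding y_def[symmetric] by simp
  qed
  have cmono: "m \<le> m' \<Longrightarrow> c m \<le> c m'" for m m' by (simp add: c_def mult_right_mono)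
  have cdiff: "m \<le> m' \<Longrightarrow> c m' - c m = (m' - m) * T" for m m' by (simp add: c_def diff_mult_distrib)
  have pairE: "integrable M (\<lambda>\<omega>. Yj j (c m) \<omega> * Yj j (c m') \<omega>) \<and>
      P.expectation (\<lambda>\<omega>. Yj j (c m) \<omega> * Yj j (c m') \<omega>) =
      (if m \<le> m' then ((1 - \<eta> * lam j) ^ T) ^ (m' - m) else ((1 - \<eta> * lam j) ^ T) ^ (m - m')) * Vj j"
    if j: "j \<in> J" for j m m'
  proof (cases "m \<le> m'")
    case True
    have k: "k0 \<le> c m" by (simp add: c_def)
    show ?thesis using cov[OF j k cmono[OF True]] True
      by (simp add: cdiff[OF True] power_mult mult.commute)
  next
    case False
    then have le: "m' \<le> m" by simp
    have k: "k0 \<le> c m'" by (simp add: c_def)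
    have "(\<lambda>\<omega>. Yj j (c m) \<omega> * Yj j (c m') \<omega>) = (\<lambda>\<omega>. Yj j (c m') \<omega> * Yj j (c m) \<omega>)"
      by (simp add: fun_eq_iff mult.commute)
    then show ?thesis using cov[OF j k cmono[OF le]] False
      by (simp add: cdiff[OF le] power_mult mult.commute)
  qed
  have EDeq: "integral\<^sup>L M (\<lambda>\<omega>. (norm (projS v *v (wbar \<omega> - wstar)))\<^sup>2) =
      (\<Sum>j\<in>J. Vs j * (1 / (real N)\<^sup>2) * (real N + 2 * (\<Sum>r = 1..N-1. real (N - r) * (1 - \<eta> * lam j) ^ (r * T))))"
  proof -
    have "integral\<^sup>L M (\<lambda>\<omega>. (norm (projS v *v (wbar \<omega> - wstar)))\<^sup>2) =
        integral\<^sup>L M (\<lambda>\<omega>. \<Sum>j\<in>J. (1 / real N)\<^sup>2 * (\<Sum>m<N. \<Sum>m'<N. Yj j (c m) \<omega> * Yj j (c m') \<omega>))"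
      by (simp add: Dpt)
    also have "\<dots> = (\<Sum>j\<in>J. (1 / real N)\<^sup>2 * (\<Sum>m<N. \<Sum>m'<N. P.expectation (\<lambda>\<omega>. Yj j (c m) \<omega> * Yj j (c m') \<omega>)))"
      using pairE by (simp add: Bochner_Integration.integral_sum Bochner_Integration.integrable_sum)
    also have "\<dots> = (\<Sum>j\<in>J. (1 / real N)\<^sup>2 * (Vj j * (\<Sum>m<N. \<Sum>m'<N.
        (if m \<le> m' then ((1 - \<eta> * lam j) ^ T) ^ (m' - m) else ((1 - \<eta> * lam j) ^ T) ^ (m - m')))))"
      using pairE by (simp add: sum_distrib_left sum_distrib_right mult.commute)
    also have "\<dots> = (\<Sum>j\<in>J. Vs j * (1 / (real N)\<^sup>2) * (real N + 2 * (\<Sum>r = 1..N-1. real (N - r) * (1 - \<eta> * lam j) ^ (r * T))))"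
    proof (rule sum.cong[OF refl])
      fix j assume j: "j \<in> J"
      have pw: "((1 - \<eta> * lam j) ^ T) ^ r = (1 - \<eta> * lam j) ^ (r * T)" for r
        by (simp add: power_mult[symmetric] mult.commute)
      show "(1 / real N)\<^sup>2 * (Vj j * (\<Sum>m<N. \<Sum>m'<N.
        (if m \<le> m' then ((1 - \<eta> * lam j) ^ T) ^ (m' - m) else ((1 - \<eta> * lam j) ^ T) ^ (m - m')))) =
        Vs j * (1 / (real N)\<^sup>2) * (real N + 2 * (\<Sum>r = 1..N-1. real (N - r) * (1 - \<eta> * lam j) ^ (r * T)))"
        unfolding comb unfolding pw Vj_eq[OF j] by (simp add: power_one_over)
    qed
    finally show ?thesis .
  qed
  have part2: "integral\<^sup>L M (\<lambda>\<omega>. (norm (projS v *v (wbar \<omega> - wstar)))\<^sup>2) \<le>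
      (1 / real N) * (1 + 2 * e / (1 - e)) * (\<Sum>j\<in>J. Vs j)"
    if e: "0 \<le> e" "e < 1" and aT: "\<forall>j\<in>J. \<bar>1 - \<eta> * lam j\<bar> ^ T \<le> e" for e
  proof -
    have "(\<Sum>j\<in>J. Vs j * (1 / (real N)\<^sup>2) * (real N + 2 * (\<Sum>r = 1..N-1. real (N - r) * (1 - \<eta> * lam j) ^ (r * T))))
        \<le> (\<Sum>j\<in>J. Vs j * (1 / (real N)\<^sup>2) * (real N + 2 * (real N * (e / (1 - e)))))"
    proof (rule sum_mono)
      fix j assume j: "j \<in> J"
      have "(\<Sum>r = 1..N-1. real (N - r) * (1 - \<eta> * lam j) ^ (r * T)) \<le> real N * (e / (1 - e))"
        by (rule term_bound[OF e]) (use aT j in auto)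
      then show "Vs j * (1 / (real N)\<^sup>2) * (real N + 2 * (\<Sum>r = 1..N-1. real (N - r) * (1 - \<eta> * lam j) ^ (r * T)))
        \<le> Vs j * (1 / (real N)\<^sup>2) * (real N + 2 * (real N * (e / (1 - e))))"
        using Vs_nonneg[OF j] by (intro mult_left_mono) auto
    qed
    also have "\<dots> = (\<Sum>j\<in>J. (1 / real N) * (1 + 2 * e / (1 - e)) * Vs j)"
      using Nne e by (intro sum.cong refl) (simp add: field_simps power2_eq_square)
    also have "\<dots> = (1 / real N) * (1 + 2 * e / (1 - e)) * (\<Sum>j\<in>J. Vs j)"
      by (simp add: sum_distrib_left)
    finally show ?thesis using EDeq by simp
  qed
  show ?thesis
    unfolding Let_def wbar_def[symmetric] J_def[symmetric] Vs_def[symmetric]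
  proof (intro conjI allI impI)
    show "integral\<^sup>L M (\<lambda>\<omega>. (norm (projS v *v (wbar \<omega> - wstar)))\<^sup>2) =
      (\<Sum>j\<in>J. Vs j * (1 / (real N)\<^sup>2) * (real N + 2 * (\<Sum>r = 1..N-1. real (N - r) * (1 - \<eta> * lam j) ^ (r * T))))"
      by (rule EDeq)
    fix e assume "0 \<le> e \<and> e < 1 \<and> (\<forall>j\<in>J. \<bar>1 - \<eta> * lam j\<bar> ^ T \<le> e)"
    then show "integral\<^sup>L M (\<lambda>\<omega>. (norm (projS v *v (wbar \<omega> - wstar)))\<^sup>2) \<le>
      (1 / real N) * (1 + 2 * e / (1 - e)) * (\<Sum>j\<in>J. Vs j)"
      using part2 by blast
  qed
qed

end
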